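(* Let $p$ be a probability rule for unnormalised quantum many-worlds theory satisfying Axioms (A1)–(A3). Then for every allowed state $v=\sum_n v_n\lvert n\rangle$ and every $n\ge0$, $p_n(v)=\dfrac{|v_n|^2}{\sum_m|v_m|^2}$.
   Context: Unnormalised quantum many-worlds theory is defined as follows. The worlds are the vectors $\lvert n\rangle$, $n\in\{0,1,2,\dots\}$, of a countably infinite orthonormal basis of a complex Hilbert space. The allowed states are the vectors $v=\sum_n v_n\lvert n\rangle$ with $0<\sum_n|v_n|^2<\infty$, where $v_n=\langle n\vert v\rangle$ is the amplitude of world $n$. The allowed transformations are all unitary operators $T$, with matrix elements $T_{ij}=\langle i\rvert T\lvert j\rangle$. A probability rule assigns to each allowed state $v$ a sequence $(p_n(v))_{n\ge 0}$ of nonnegative reals with $\sum_n p_n(v)=1$. The axioms are: (A1) Present state dependence: $p_n$ depends only on the present state $v$, so $p$ is a function of the state alone. (A2) Weak connection with amplitudes: for every allowed state $v$, $v_n=0$ implies $p_n(v)=0$. (A3) Weak connection with transformations: for every allowed state $v$ and allowed transformation $T$, and every partition of $\{0,1,2,\dots\}$ into subsets $\mathcal S_k$ such that $T_{ij}=0$ whenever $i$ and $j$ lie in different subsets, we have $\sum_{n\in\mathcal S_k}p_n(v)=\sum_{n\in\mathcal S_k}p_n(Tv)$ for every $k$. *)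

theory Defs
  imports "HOL-Analysis.Analysis"
begin

text \<open>Vectors of the Hilbert space are represented by their amplitude sequences
  v :: nat \<Rightarrow> complex, v n = amplitude of world n; the Hilbert space is l2(nat).\<close>

definition sq_summable :: "(nat \<Rightarrow> complex) \<Rightarrow> bool" where
  "sq_summable v \<longleftrightarrow> summable (\<lambda>n. (cmod (v n))\<^sup>2)"

definition sqnorm :: "(nat \<Rightarrow> complex) \<Rightarrow> real" where
  "sqnorm v = (\<Sum>n. (cmod (v n))\<^sup>2)"

definition allowed_state :: "(nat \<Rightarrow> complex) \<Rightarrow> bool" where
  "allowed_state v \<longleftrightarrow> sq_summable v \<and> sqnorm v > 0"

definition unitary_op :: "((nat \<Rightarrow> complex) \<Rightarrow> (nat \<Rightarrow> complex)) \<Rightarrow> bool" where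
  "unitary_op T \<longleftrightarrow>
     (\<forall>v. sq_summable v \<longrightarrow> sq_summable (T v)) \<and>
     (\<forall>v w. sq_summable v \<longrightarrow> sq_summable w \<longrightarrow> T (\<lambda>n. v n + w n) = (\<lambda>n. T v n + T w n)) \<and>
     (\<forall>c v. sq_summable v \<longrightarrow> T (\<lambda>n. c * v n) = (\<lambda>n. c * T v n)) \<and>
     (\<forall>v. sq_summable v \<longrightarrow> sqnorm (T v) = sqnorm v) \<and>
     (\<forall>w. sq_summable w \<longrightarrow> (\<exists>v. sq_summable v \<and> T v = w))"

definition ket :: "nat \<Rightarrow> nat \<Rightarrow> complex" where
  "ket j = (\<lambda>k. if k = j then 1 else 0)"

definition mat_el :: "((nat \<Rightarrow> complex) \<Rightarrow> (nat \<Rightarrow> complex)) \<Rightarrow> nat \<Rightarrow> nat \<Rightarrow> complex" where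
  "mat_el T i j = T (ket j) i"

text \<open>A probability rule (A1: a function of the present state only).\<close>
definition prob_rule :: "((nat \<Rightarrow> complex) \<Rightarrow> nat \<Rightarrow> real) \<Rightarrow> bool" where
  "prob_rule p \<longleftrightarrow> (\<forall>v. allowed_state v \<longrightarrow> (\<forall>n. p v n \<ge> 0) \<and> p v sums 1)"

definition axiom_A2 :: "((nat \<Rightarrow> complex) \<Rightarrow> nat \<Rightarrow> real) \<Rightarrow> bool" where
  "axiom_A2 p \<longleftrightarrow> (\<forall>v n. allowed_state v \<longrightarrow> v n = 0 \<longrightarrow> p v n = 0)"

text \<open>Partitions of nat into (at most countably many) subsets S_k = {n. sigma n = k}.\<close>
definition axiom_A3 :: "((nat \<Rightarrow> complex) \<Rightarrow> nat \<Rightarrow> real) \<Rightarrow> bool" where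
  "axiom_A3 p \<longleftrightarrow> (\<forall>v T (\<sigma>::nat \<Rightarrow> nat).
      allowed_state v \<longrightarrow> unitary_op T \<longrightarrow>
      (\<forall>i j. \<sigma> i \<noteq> \<sigma> j \<longrightarrow> mat_el T i j = 0) \<longrightarrow>
      (\<forall>k. infsum (p v) {n. \<sigma> n = k} = infsum (p (T v)) {n. \<sigma> n = k}))"

end

theory Submission
  imports Defs
begin

lemma finmod:
  assumes "sq_summable w" "finite F" "\<And>k. k \<notin> F \<Longrightarrow> w' k = w k"
    "(\<Sum>k\<in>F. (cmod (w' k))^2) = (\<Sum>k\<in>F. (cmod (w k))^2)"
  shows "sq_summable w' \<and> sqnorm w' = sqnorm w"
proof -
  define d where "d = (\<lambda>k. (cmod (w' k))^2 - (cmod (w k))^2)"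
  have ds: "d sums (\<Sum>k\<in>F. d k)"
    by (rule sums_finite[OF assms(2)]) (simp add: d_def assms(3))
  have d0: "(\<Sum>k\<in>F. d k) = 0" using assms(4) by (simp add: d_def sum_subtractf)
  have s: "summable (\<lambda>k. (cmod (w k))^2)" using assms(1) by (simp add: sq_summable_def)
  have eq: "(\<lambda>k. (cmod (w' k))^2) = (\<lambda>k. (cmod (w k))^2 + d k)" by (simp add: d_def)
  have "(\<lambda>k. (cmod (w k))^2 + d k) sums (sqnorm w + 0)"
    using sums_add[OF summable_sums[OF s] ds] d0 by (simp add: sqnorm_def)
  then show ?thesis unfolding sq_summable_def sqnorm_def eq
    by (simp add: sums_iff)
qed

definition rot :: "nat \<Rightarrow> nat \<Rightarrow> complex \<Rightarrow> complex \<Rightarrow> (nat\<Rightarrow>complex) \<Rightarrow> nat \<Rightarrow> complex" where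
  "rot i j a b w = (\<lambda>k. if k = i then a * w i - cnj b * w j else if k = j then b * w i + cnj a * w j else w k)"

lemma rot_iso:
  fixes a b x y :: complex
  assumes "(cmod a)^2 + (cmod b)^2 = 1"
  shows "(cmod (a*x - cnj b * y))^2 + (cmod (b*x + cnj a*y))^2 = (cmod x)^2 + (cmod y)^2"
proof -
  have "(cmod (a*x - cnj b * y))^2 + (cmod (b*x + cnj a*y))^2 = ((cmod a)^2 + (cmod b)^2) * ((cmod x)^2 + (cmod y)^2)"
    unfolding cmod_power2 by (simp add: power2_eq_square) algebra
  then show ?thesis using assms by simp
qed

lemma cnj_sum1:
  assumes "(cmod a)^2 + (cmod b)^2 = 1"
  shows "cnj a * a + cnj b * b = 1"
  using assms by (metis complex_norm_square mult.commute of_real_1 of_real_add)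

lemma rot_inv:
  assumes "(cmod a)^2 + (cmod b)^2 = 1" "i \<noteq> j"
  shows "rot i j (cnj a) (-b) (rot i j a b w) = w"
proof -
  have e: "cnj a * a + cnj b * b = 1" using cnj_sum1[OF assms(1)] .
  have 1: "cnj a * (a * w i - cnj b * w j) - cnj (- b) * (b * w i + cnj a * w j) = (cnj a * a + cnj b * b) * w i"
    by (simp add: algebra_simps)
  have 2: "- b * (a * w i - cnj b * w j) + cnj (cnj a) * (b * w i + cnj a * w j) = (cnj a * a + cnj b * b) * w j"
    by (simp add: algebra_simps)
  show ?thesis using assms(2) 1 2 e
    by (simp add: rot_def fun_eq_iff)
qed

lemma rot_fix: "k \<noteq> i \<Longrightarrow> k \<noteq> j \<Longrightarrow> rot i j a b w k = w k"
  by (simp add: rot_def)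

lemma rot_sq:
  assumes "sq_summable w" "i \<noteq> j" "(cmod a)^2 + (cmod b)^2 = 1"
  shows "sq_summable (rot i j a b w) \<and> sqnorm (rot i j a b w) = sqnorm w"
proof (rule finmod[OF assms(1), of "{i,j}"])
  show "\<And>k. k \<notin> {i, j} \<Longrightarrow> rot i j a b w k = w k" by (simp add: rot_def)
  show "(\<Sum>k\<in>{i, j}. (cmod (rot i j a b w k))\<^sup>2) = (\<Sum>k\<in>{i, j}. (cmod (w k))\<^sup>2)"
    using assms(2) rot_iso[OF assms(3)] by (simp add: rot_def)
qed simp

lemma rot_unitary:
  assumes "i \<noteq> j" "(cmod a)^2 + (cmod b)^2 = 1"
  shows "unitary_op (rot i j a b)"
  unfolding unitary_op_def
proof (intro conjI allI impI)
  fix v assume "sq_summable v"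
  then show "sq_summable (rot i j a b v)" "sqnorm (rot i j a b v) = sqnorm v"
    using rot_sq[OF _ assms] by auto
next
  fix v w :: "nat \<Rightarrow> complex"
  show "rot i j a b (\<lambda>n. v n + w n) = (\<lambda>n. rot i j a b v n + rot i j a b w n)"
    unfolding rot_def by (rule ext) (simp add: distrib_left)
next
  fix c and v :: "nat \<Rightarrow> complex"
  show "rot i j a b (\<lambda>n. c * v n) = (\<lambda>n. c * rot i j a b v n)"
    unfolding rot_def by (rule ext) (simp add: right_diff_distrib distrib_left mult.left_commute)
next
  fix w assume w: "sq_summable w"
  have n: "(cmod (cnj a))^2 + (cmod (-b))^2 = 1" using assms(2) by simp
  show "\<exists>v. sq_summable v \<and> rot i j a b v = w"
    by (rule exI[of _ "rot i j (cnj a) (-b) w"])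
       (use rot_sq[OF w assms(1) n] rot_inv[OF n assms(1)] in simp)
qed

lemma unitary_comp:
  assumes S: "unitary_op S" and T: "unitary_op T"
  shows "unitary_op (\<lambda>w. S (T w))"
  unfolding unitary_op_def
proof (intro conjI allI impI)
  fix v assume v: "sq_summable v"
  then show "sq_summable (S (T v))" "sqnorm (S (T v)) = sqnorm v"
    using S T by (auto simp: unitary_op_def)
next
  fix v w :: "nat \<Rightarrow> complex" assume "sq_summable v" "sq_summable w"
  then show "S (T (\<lambda>n. v n + w n)) = (\<lambda>n. S (T v) n + S (T w) n)"
    using S T by (auto simp: unitary_op_def)
next
  fix c and v :: "nat \<Rightarrow> complex" assume "sq_summable v"
  then show "S (T (\<lambda>n. c * v n)) = (\<lambda>n. c * S (T v) n)"
    using S T by (auto simp: unitary_op_def)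
next
  fix w assume "sq_summable w"
  then obtain u where u: "sq_summable u" "S u = w" using S by (auto simp: unitary_op_def)
  then obtain v where "sq_summable v" "T v = u" using T by (auto simp: unitary_op_def)
  then show "\<exists>v. sq_summable v \<and> S (T v) = w" using u by auto
qed

lemma rot_zero: "w i = 0 \<Longrightarrow> w j = 0 \<Longrightarrow> rot i j a b w = w"
  unfolding rot_def by (rule ext) simp

lemma block_mat:
  assumes "i \<noteq> j"
  shows "(if a = j then i else a) \<noteq> (if b = j then i else b) \<Longrightarrow>
    mat_el (\<lambda>w. rot i j a2 b2 (rot i j a1 b1 w)) a b = 0"
proof -
  assume ne: "(if a = j then i else a) \<noteq> (if b = j then i else b)"
  show ?thesis
  proof (cases "b = i \<or> b = j")
    case False
    then have "ket b i = 0" "ket b j = 0" by (auto simp: ket_def)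
    then have "rot i j a2 b2 (rot i j a1 b1 (ket b)) = ket b" by (simp add: rot_zero)
    moreover have "a \<noteq> b" using ne False by auto
    ultimately show ?thesis by (simp add: mat_el_def ket_def)
  next
    case True
    then have "a \<noteq> i" "a \<noteq> j" using ne by auto
    then show ?thesis using True by (auto simp: mat_el_def rot_fix ket_def)
  qed
qed

lemma prob_facts:
  assumes "prob_rule p" "allowed_state v"
  shows "\<And>n. p v n \<ge> 0" "p v sums 1"
  using assms by (auto simp: prob_rule_def)

lemma move:
  assumes P: "prob_rule p" and A3: "axiom_A3 p" and v: "allowed_state v" and ij: "i \<noteq> j"
    and out: "\<And>k. k \<noteq> i \<Longrightarrow> k \<noteq> j \<Longrightarrow> v' k = v k"
    and nm: "(cmod (v' i))^2 + (cmod (v' j))^2 = (cmod (v i))^2 + (cmod (v j))^2"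
  shows "allowed_state v' \<and> p v i + p v j = p v' i + p v' j \<and> (\<forall>k. k \<noteq> i \<longrightarrow> k \<noteq> j \<longrightarrow> p v' k = p v k)"
proof -
  have fm: "sq_summable v' \<and> sqnorm v' = sqnorm v"
    by (rule finmod[of v "{i,j}"]) (use v ij out nm in \<open>auto simp: allowed_state_def\<close>)
  then have v': "allowed_state v'" using v by (simp add: allowed_state_def)
  define r2 where "r2 = (cmod (v i))^2 + (cmod (v j))^2"
  show ?thesis
  proof (cases "r2 = 0")
    case True
    then have "v i = 0" "v j = 0" unfolding r2_def
      by (smt (verit) zero_le_power2 zero_less_norm_iff zero_less_power2)+
    moreover have "v' i = 0" "v' j = 0" using True nm unfolding r2_def
      by (smt (verit) zero_le_power2 zero_less_norm_iff zero_less_power2)+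
    ultimately have "v' = v" using out by (metis ext)
    then show ?thesis using v by simp
  next
    case False
    have r2pos: "r2 > 0" using False unfolding r2_def by (smt (verit) zero_le_power2)
    define r where "r = sqrt r2"
    have rpos: "r > 0" using r2pos by (simp add: r_def)
    have rr: "r * r = r2" using r2pos by (simp add: r_def)
    define R where "R = complex_of_real r"
    have R0: "R \<noteq> 0" using rpos by (simp add: R_def)
    have cR: "cnj R = R" by (simp add: R_def)
    define a1 where "a1 = cnj (v i) / R"
    define b1 where "b1 = - (v j / R)"
    define a2 where "a2 = v' i / R"
    define b2 where "b2 = v' j / R"
    have n1: "(cmod a1)^2 + (cmod b1)^2 = 1"
    proof -
      have "(cmod a1)^2 + (cmod b1)^2 = r2 / r^2"
        unfolding a1_def b1_def R_def r2_def using rpos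
        by (simp add: norm_divide power_divide add_divide_distrib)
      then show ?thesis using rr r2pos by (simp add: power2_eq_square)
    qed
    have n2: "(cmod a2)^2 + (cmod b2)^2 = 1"
    proof -
      have "(cmod a2)^2 + (cmod b2)^2 = r2 / r^2"
        unfolding a2_def b2_def R_def r2_def using rpos nm
        by (simp add: norm_divide power_divide add_divide_distrib[symmetric])
      then show ?thesis using rr r2pos by (simp add: power2_eq_square)
    qed
    define T where "T = (\<lambda>w. rot i j a2 b2 (rot i j a1 b1 w))"
    have uT: "unitary_op T" unfolding T_def
      by (rule unitary_comp) (use rot_unitary[OF ij n1] rot_unitary[OF ij n2] in auto)
    have ci: "cnj (v i) * v i + cnj (v j) * v j = R * R"
    proof -
      have "cnj (v i) * v i + cnj (v j) * v j = complex_of_real r2"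
        unfolding r2_def of_real_add complex_norm_square by (simp add: mult.commute)
      then show ?thesis by (simp add: R_def rr[symmetric])
    qed
    have s1i: "rot i j a1 b1 v i = R"
    proof -
      have "rot i j a1 b1 v i = (cnj (v i) * v i + cnj (v j) * v j) / R"
        by (simp add: rot_def a1_def b1_def cR add_divide_distrib)
      then show ?thesis using ci R0 by simp
    qed
    have s1j: "rot i j a1 b1 v j = 0"
      using ij by (simp add: rot_def a1_def b1_def cR)
    have Tv: "T v = v'"
    proof
      fix k show "T v k = v' k"
        using ij s1i s1j R0 out[of k] by (auto simp: T_def rot_def a2_def b2_def)
    qed
    define \<sigma> where "\<sigma> = (\<lambda>k::nat. if k = j then i else k)"
    have bd: "\<forall>a b. \<sigma> a \<noteq> \<sigma> b \<longrightarrow> mat_el T a b = 0"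
      using block_mat[OF ij] unfolding T_def \<sigma>_def by blast
    have eqs: "\<And>k. infsum (p v) {n. \<sigma> n = k} = infsum (p v') {n. \<sigma> n = k}"
      using A3 v uT bd Tv unfolding axiom_A3_def by metis
    have si: "{n. \<sigma> n = i} = {i, j}" by (auto simp: \<sigma>_def)
    have sk: "k \<noteq> i \<Longrightarrow> k \<noteq> j \<Longrightarrow> {n. \<sigma> n = k} = {k}" for k by (auto simp: \<sigma>_def)
    have "p v i + p v j = p v' i + p v' j"
      using eqs[of i] ij unfolding si by simp
    moreover have "\<forall>k. k \<noteq> i \<longrightarrow> k \<noteq> j \<longrightarrow> p v' k = p v k"
    proof (intro allI impI)
      fix k assume "k \<noteq> i" "k \<noteq> j"
      then show "p v' k = p v k" using eqs[of k] sk[of k] by simp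
    qed
    ultimately show ?thesis using v' by simp
  qed
qed


lemma a2D: "axiom_A2 p \<Longrightarrow> allowed_state v \<Longrightarrow> v n = 0 \<Longrightarrow> p v n = 0"
  by (simp add: axiom_A2_def)

lemma symm:
  assumes P: "prob_rule p" and A2: "axiom_A2 p" and A3: "axiom_A3 p" and v: "allowed_state v"
    and d: "i \<noteq> j" "i \<noteq> z" "j \<noteq> z" and eq: "v i = v j" and vz: "v z = 0"
  shows "p v i = p v j"
proof -
  define c where "c = v i"
  define u1 where "u1 = v(i := 0, z := c)"
  have m1: "allowed_state u1 \<and> p v i + p v z = p u1 i + p u1 z"
    using move[OF P A3 v d(2), of u1] by (auto simp: u1_def vz c_def)
  have "p v z = 0" using a2D[OF A2 v vz] .
  moreover have "p u1 i = 0" using a2D[OF A2 _, of u1 i] m1 by (simp add: u1_def d)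
  ultimately have e1: "p v i = p u1 z" using m1 by simp
  define u2 where "u2 = u1(i := c, j := 0)"
  have m2: "allowed_state u2 \<and> p u2 z = p u1 z"
    using move[OF P A3 _ d(1), of u1 u2] m1 d by (auto simp: u2_def u1_def eq c_def)
  have m3: "p u2 z + p u2 j = p v z + p v j"
    using move[OF P A3 _ d(3)[symmetric], of u2 v] m2 d
    by (auto simp: u2_def u1_def eq c_def vz)
  have "p u2 j = 0" using a2D[OF A2 _, of u2 j] m2 d by (simp add: u2_def)
  then show ?thesis using e1 m2 m3 \<open>p v z = 0\<close> by simp
qed

definition conc :: "nat \<Rightarrow> nat set \<Rightarrow> (nat \<Rightarrow> complex) \<Rightarrow> nat \<Rightarrow> complex" where
  "conc m F v = (\<lambda>k. if k = m then complex_of_real (sqrt (\<Sum>l\<in>insert m F. (cmod (v l))^2))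
      else if k \<in> F then 0 else v k)"

lemma csq: "s \<ge> 0 \<Longrightarrow> (cmod (complex_of_real (sqrt s)))^2 = s"
  by simp

lemma conc_lemma:
  assumes P: "prob_rule p" and A2: "axiom_A2 p" and A3: "axiom_A3 p" and v: "allowed_state v"
    and F: "finite F" "F \<noteq> {}"
  shows "m \<notin> F \<Longrightarrow> allowed_state (conc m F v) \<and> (\<Sum>k\<in>insert m F. p v k) = p (conc m F v) m
     \<and> (\<forall>k. k \<notin> insert m F \<longrightarrow> p (conc m F v) k = p v k)"
  using F
proof (induction F rule: finite_ne_induct)
  case (singleton x)
  have mx: "m \<noteq> x" using singleton by simp
  have nn: "(\<Sum>l\<in>{m, x}. (cmod (v l))^2) \<ge> 0" by (intro sum_nonneg) simp
  have "allowed_state (conc m {x} v) \<and> p v m + p v x = p (conc m {x} v) m + p (conc m {x} v) x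
     \<and> (\<forall>k. k \<noteq> m \<longrightarrow> k \<noteq> x \<longrightarrow> p (conc m {x} v) k = p v k)"
  proof (rule move[OF P A3 v mx])
    show "\<And>k. k \<noteq> m \<Longrightarrow> k \<noteq> x \<Longrightarrow> conc m {x} v k = v k" by (simp add: conc_def)
    show "(cmod (conc m {x} v m))\<^sup>2 + (cmod (conc m {x} v x))\<^sup>2 = (cmod (v m))\<^sup>2 + (cmod (v x))\<^sup>2"
      using mx nn by (simp add: conc_def)
  qed
  moreover have "p (conc m {x} v) x = 0"
    using a2D[OF A2, of "conc m {x} v" x] calculation mx by (simp add: conc_def)
  ultimately show ?case using mx by auto
next
  case (insert x F)
  have mx: "m \<noteq> x" and mF: "m \<notin> F" using insert by auto
  define w where "w = conc m F v"
  have IH: "allowed_state w \<and> (\<Sum>k\<in>insert m F. p v k) = p w m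
     \<and> (\<forall>k. k \<notin> insert m F \<longrightarrow> p w k = p v k)" using insert.IH mF by (simp add: w_def)
  have nn: "(\<Sum>l\<in>insert m F. (cmod (v l))^2) \<ge> 0" by (intro sum_nonneg) simp
  have nn2: "(\<Sum>l\<in>insert m (insert x F). (cmod (v l))^2) \<ge> 0" by (intro sum_nonneg) simp
  define v' where "v' = conc m (insert x F) v"
  have mv: "allowed_state v' \<and> p w m + p w x = p v' m + p v' x
     \<and> (\<forall>k. k \<noteq> m \<longrightarrow> k \<noteq> x \<longrightarrow> p v' k = p w k)"
  proof (rule move[OF P A3 _ mx])
    show "allowed_state w" using IH by simp
    show "\<And>k. k \<noteq> m \<Longrightarrow> k \<noteq> x \<Longrightarrow> v' k = w k" by (simp add: conc_def v'_def w_def)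
    have s: "(\<Sum>l\<in>insert m (insert x F). (cmod (v l))^2) = (cmod (v x))^2 + (\<Sum>l\<in>insert m F. (cmod (v l))^2)"
    proof -
      have "insert m (insert x F) = insert x (insert m F)" by auto
      then show ?thesis using insert.hyps mx by (simp add: sum.insert_remove)
    qed
    show "(cmod (v' m))\<^sup>2 + (cmod (v' x))\<^sup>2 = (cmod (w m))\<^sup>2 + (cmod (w x))\<^sup>2"
      using mx nn nn2 s insert.hyps by (simp add: conc_def v'_def w_def)
  qed
  have px: "p v' x = 0" using a2D[OF A2, of v' x] mv mx by (simp add: conc_def v'_def)
  have "(\<Sum>k\<in>insert m (insert x F). p v k) = p v x + (\<Sum>k\<in>insert m F. p v k)"
  proof -
    have "insert m (insert x F) = insert x (insert m F)" by auto
    then show ?thesis using insert.hyps mx by simp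
  qed
  also have "\<dots> = p w x + p w m" using IH insert.hyps mx by simp
  also have "\<dots> = p v' m" using mv px by simp
  finally show ?case using mv IH v'_def by auto
qed

lemma movef:
  assumes P: "prob_rule p" and A2: "axiom_A2 p" and A3: "axiom_A3 p" and v: "allowed_state v"
    and H: "finite H" "m \<in> H" "H - {m} \<noteq> {}"
    and out: "\<And>k. k \<notin> H \<Longrightarrow> v' k = v k"
    and nm: "(\<Sum>k\<in>H. (cmod (v' k))^2) = (\<Sum>k\<in>H. (cmod (v k))^2)"
  shows "allowed_state v' \<and> (\<Sum>k\<in>H. p v k) = (\<Sum>k\<in>H. p v' k) \<and> (\<forall>k. k \<notin> H \<longrightarrow> p v' k = p v k)"
proof -
  have fm: "sq_summable v' \<and> sqnorm v' = sqnorm v"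
    by (rule finmod[of v H]) (use v H out nm in \<open>auto simp: allowed_state_def\<close>)
  then have v': "allowed_state v'" using v by (simp add: allowed_state_def)
  define G where "G = H - {m}"
  have G: "finite G" "G \<noteq> {}" "m \<notin> G" "insert m G = H" using H by (auto simp: G_def)
  have ceq: "conc m G v' = conc m G v"
    unfolding conc_def using G(4) nm out G(3) by (auto simp: fun_eq_iff G_def)
  note c1 = conc_lemma[OF P A2 A3 v G(1,2) G(3)]
  note c2 = conc_lemma[OF P A2 A3 v' G(1,2) G(3)]
  show ?thesis using c1 c2 ceq v' G(4) by auto
qed

lemma ub:
  assumes P: "prob_rule p" and A2: "axiom_A2 p" and A3: "axiom_A3 p" and v: "allowed_state v"
    and nM: "n < M" and k: "k \<ge> 1"
    and l: "real l * ((cmod (v n))^2 / real k) \<le> (\<Sum>q\<in>{..<M}-{n}. (cmod (v q))^2)"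
  shows "p v n * (real k + real l) \<le> real k"
proof -
  define A where "A = (cmod (v n))^2"
  define a where "a = A / real k"
  have a0: "a \<ge> 0" by (simp add: a_def A_def)
  define c where "c = complex_of_real (sqrt a)"
  have cc: "(cmod c)^2 = a" using a0 by (simp add: c_def)
  define z where "z = M"
  define E1' where "E1' = {M+1..<M+k}"
  define E1 where "E1 = insert n E1'"
  define E2 where "E2 = {M+k..<M+k+l}"
  define r where "r = M+k+l"
  define H1 where "H1 = {..M+k+l} - {n}"
  define rem where "rem = (\<Sum>q\<in>H1. (cmod (v q))^2) - real l * a"
  have fH1: "finite H1" by (simp add: H1_def)
  have "(\<Sum>q\<in>{..<M}-{n}. (cmod (v q))^2) \<le> (\<Sum>q\<in>H1. (cmod (v q))^2)"
    by (rule sum_mono2) (auto simp: H1_def)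
  then have rem0: "rem \<ge> 0" using l by (simp add: rem_def a_def A_def)
  define u1 where "u1 = (\<lambda>q. if q \<in> H1 then (if q \<in> E2 then c else if q = r then complex_of_real (sqrt rem) else 0) else v q)"
  have rE2: "r \<notin> E2" by (simp add: r_def E2_def)
  have rH1: "r \<in> H1" using nM by (simp add: r_def H1_def)
  have E2H1: "E2 \<subseteq> H1" using nM by (auto simp: E2_def H1_def)
  have nu1: "(\<Sum>q\<in>H1. (cmod (u1 q))^2) = (\<Sum>q\<in>H1. (cmod (v q))^2)"
  proof -
    have "(\<Sum>q\<in>H1. (cmod (u1 q))^2) = (\<Sum>q\<in>H1. (if q \<in> E2 then a else 0) + (if q = r then rem else 0))"
      by (rule sum.cong) (use cc rem0 rE2 in \<open>auto simp: u1_def\<close>)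
    also have "\<dots> = (\<Sum>q\<in>H1. (if q \<in> E2 then a else 0)) + rem"
      by (simp add: sum.distrib sum.delta[OF fH1] rH1)
    also have "(\<Sum>q\<in>H1. (if q \<in> E2 then a else 0)) = (\<Sum>q\<in>H1 \<inter> E2. a)"
      by (rule sum.inter_restrict[symmetric, OF fH1])
    also have "H1 \<inter> E2 = E2" using E2H1 by auto
    also have "(\<Sum>q\<in>E2. a) = real l * a" by (simp add: E2_def)
    finally show ?thesis by (simp add: rem_def)
  qed
  have zH1: "z \<in> H1 - {r}" using nM k by (auto simp: z_def H1_def r_def)
  have m1: "allowed_state u1 \<and> (\<forall>q. q \<notin> H1 \<longrightarrow> p u1 q = p v q)"
    using movef[OF P A2 A3 v fH1 rH1 _ _ nu1] zH1 by (auto simp: u1_def)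
  have pu1n: "p u1 n = p v n" using m1 by (simp add: H1_def)
  have u1z: "u1 q = 0" if "q \<in> insert z E1'" for q
    using that nM k by (auto simp: u1_def z_def E1'_def H1_def E2_def r_def)
  have u1n: "u1 n = v n" by (simp add: u1_def H1_def)
  define H2 where "H2 = insert n (insert z E1')"
  define u2 where "u2 = (\<lambda>q. if q \<in> E1 then c else u1 q)"
  have nzE: "n \<notin> insert z E1'" using nM by (auto simp: z_def E1'_def)
  have zE1: "z \<notin> E1" using nM by (auto simp: z_def E1'_def E1_def)
  have fH2: "finite H2" by (simp add: H2_def E1'_def)
  have cE1': "card E1' = k - 1" by (simp add: E1'_def)
  have ka: "real k * a = A" using k by (simp add: a_def)
  have nu2: "(\<Sum>q\<in>H2. (cmod (u2 q))^2) = (\<Sum>q\<in>H2. (cmod (u1 q))^2)"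
  proof -
    have "(\<Sum>q\<in>H2. (cmod (u1 q))^2) = A"
      using nzE u1z u1n by (simp add: H2_def A_def E1'_def)
    moreover have "(\<Sum>q\<in>H2. (cmod (u2 q))^2) = a + (\<Sum>q\<in>insert z E1'. (cmod (u2 q))^2)"
      using nzE cc by (simp add: H2_def u2_def E1_def E1'_def z_def)
    moreover have "(\<Sum>q\<in>insert z E1'. (cmod (u2 q))^2) = (\<Sum>q\<in>E1'. a)"
    proof -
      have zE1': "z \<notin> E1'" "finite E1'" using zE1 by (auto simp: E1_def E1'_def)
      have "u2 z = 0" using zE1 u1z by (simp add: u2_def)
      moreover have "(\<Sum>q\<in>E1'. (cmod (u2 q))^2) = (\<Sum>q\<in>E1'. a)"
        by (rule sum.cong) (use cc in \<open>auto simp: u2_def E1_def\<close>)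
      ultimately show ?thesis using zE1' by simp
    qed
    moreover have "(\<Sum>q\<in>E1'. a) = (real k - 1) * a" using cE1' k by (simp add: of_nat_diff)
    ultimately show ?thesis using ka by (simp add: algebra_simps)
  qed
  have zH2: "z \<in> H2 - {n}" using nzE by (auto simp: H2_def)
  have m2: "allowed_state u2 \<and> (\<Sum>q\<in>H2. p u1 q) = (\<Sum>q\<in>H2. p u2 q)"
    using movef[OF P A2 A3 _ fH2 _ _ _ nu2] m1 zH2 by (auto simp: u2_def H2_def E1_def)
  have u2a: "allowed_state u2" using m2 by simp
  have "(\<Sum>q\<in>H2. p u1 q) = p u1 n"
    using nzE a2D[OF A2 _ u1z] m1 by (simp add: H2_def E1'_def)
  moreover have "(\<Sum>q\<in>H2. p u2 q) = (\<Sum>q\<in>E1. p u2 q)"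
  proof -
    have "H2 = insert z E1" by (auto simp: H2_def E1_def)
    moreover have "p u2 z = 0" using a2D[OF A2 u2a] zE1 u1z by (simp add: u2_def)
    ultimately show ?thesis using zE1 by (simp add: E1_def E1'_def)
  qed
  ultimately have pvn: "p v n = (\<Sum>q\<in>E1. p u2 q)" using m2 pu1n by simp
  define E where "E = E1 \<union> E2"
  have fE: "finite E" "finite E1" "finite E2" by (auto simp: E_def E1_def E1'_def E2_def)
  have dE: "E1 \<inter> E2 = {}" using nM by (auto simp: E1_def E1'_def E2_def)
  have cE1: "card E1 = k" using cE1' k nM by (simp add: E1_def E1'_def)
  have cE: "card E = k + l" using cE1 dE fE by (simp add: E_def card_Un_disjoint E2_def)
  have zE: "z \<notin> E" using zE1 k by (auto simp: E_def E2_def z_def)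
  have u2E: "u2 q = c" if "q \<in> E" for q
    using that dE rE2 E2H1 by (auto simp: E_def u2_def u1_def)
  have u2z: "u2 z = 0" using zE1 u1z by (simp add: u2_def)
  have nE: "n \<in> E" by (simp add: E_def E1_def)
  define \<pi> where "\<pi> = p u2 n"
  have peq: "p u2 q = \<pi>" if "q \<in> E" for q
  proof (cases "q = n")
    case True then show ?thesis by (simp add: \<pi>_def)
  next
    case False
    have "p u2 n = p u2 q"
      by (rule symm[OF P A2 A3 u2a, of n q z]) (use False nE that zE u2E u2z in auto)
    then show ?thesis by (simp add: \<pi>_def)
  qed
  have s1: "(\<Sum>q\<in>E1. p u2 q) = real k * \<pi>"
    using peq cE1 by (simp add: E_def)
  have s2: "(\<Sum>q\<in>E. p u2 q) = (real k + real l) * \<pi>"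
    using peq cE by simp
  have "(\<Sum>q\<in>E. p u2 q) \<le> suminf (p u2)"
    by (rule sum_le_suminf) (use prob_facts[OF P u2a] fE in \<open>auto simp: sums_iff\<close>)
  then have "(real k + real l) * \<pi> \<le> 1" using s2 prob_facts(2)[OF P u2a] by (simp add: sums_iff)
  then have "real k * ((real k + real l) * \<pi>) \<le> real k" 
    by (simp add: mult_left_le)
  then show ?thesis using pvn s1 by (simp add: algebra_simps)
qed
lemma ub2:
  assumes P: "prob_rule p" and A2: "axiom_A2 p" and A3: "axiom_A3 p" and v: "allowed_state v"
    and nM: "n < M" and Apos: "(cmod (v n))^2 > 0"
  shows "p v n * ((cmod (v n))^2 + (\<Sum>q\<in>{..<M}-{n}. (cmod (v q))^2)) \<le> (cmod (v n))^2"
proof (rule ccontr)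
  define A where "A = (cmod (v n))^2"
  define B where "B = (\<Sum>q\<in>{..<M}-{n}. (cmod (v q))^2)"
  define x where "x = p v n"
  assume "\<not> ?thesis"
  then have gt: "x * (A + B) > A" by (simp add: A_def B_def x_def)
  have B0: "B \<ge> 0" by (simp add: B_def sum_nonneg)
  have A0: "A > 0" using Apos by (simp add: A_def)
  have x0: "x > 0"
  proof -
    have "x * (A + B) > 0" using gt A0 by simp
    moreover have "x \<ge> 0" using prob_facts(1)[OF P v] by (simp add: x_def)
    ultimately show ?thesis by (metis less_eq_real_def mult_zero_left order_less_irrefl)
  qed
  define d where "d = x * (A + B) - A"
  have d0: "d > 0" using gt by (simp add: d_def)
  obtain k :: nat where k: "real k > x * A / d" "k \<ge> 1"
  proof -
    obtain k0 :: nat where "real k0 > x * A / d" using reals_Archimedean2 by blast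
    then show ?thesis using that[of "k0 + 1"] by simp
  qed
  define l where "l = nat \<lfloor>B * real k / A\<rfloor>"
  have fl0: "\<lfloor>B * real k / A\<rfloor> \<ge> 0" using B0 A0 by simp
  have l1: "real l \<le> B * real k / A" using fl0 by (simp add: l_def)
  have l2: "real l > B * real k / A - 1"
  proof -
    have "B * real k / A < of_int (\<lfloor>B * real k / A\<rfloor> + 1)" using floor_correct[of "B * real k / A"] by blast
    moreover have "real l = of_int \<lfloor>B * real k / A\<rfloor>" using fl0 by (simp add: l_def)
    ultimately show ?thesis by simp
  qed
  have kpos: "real k > 0" using k by simp
  have "real l * (A / real k) \<le> B"
  proof -
    have "real l * A \<le> B * real k" using l1 A0 by (simp add: pos_le_divide_eq)
    then show ?thesis using kpos by (simp add: field_simps)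
  qed
  then have "x * (real k + real l) \<le> real k"
    using ub[OF P A2 A3 v nM k(2), of l] by (simp add: A_def B_def x_def)
  moreover have "x * (real k + real l) > x * (real k + B * real k / A - 1)"
    using l2 x0 by simp
  ultimately have "x * (real k + B * real k / A - 1) < real k" by linarith
  then have "A * (x * (real k + B * real k / A - 1)) < A * real k" using A0 by simp
  moreover have "A * (x * (real k + B * real k / A - 1)) = x * real k * (A + B) - x * A"
  proof -
    have e: "A * (B * real k / A) = B * real k" using A0 by simp
    have "A * (x * (real k + B * real k / A - 1)) = x * (A * real k + A * (B * real k / A) - A)"
      by (simp add: algebra_simps)
    also have "\<dots> = x * real k * (A + B) - x * A" unfolding e by (simp add: algebra_simps)
    finally show ?thesis .
  qed
  ultimately have "x * real k * (A + B) - x * A < A * real k" by simp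
  then have "real k * d < x * A" by (simp add: d_def algebra_simps)
  moreover have "x * A < real k * d" using k(1) d0 by (simp add: divide_less_eq mult.commute)
  ultimately show False by simp
qed

lemma ub3:
  assumes P: "prob_rule p" and A2: "axiom_A2 p" and A3: "axiom_A3 p" and v: "allowed_state v"
  shows "p v n * sqnorm v \<le> (cmod (v n))^2"
proof (cases "v n = 0")
  case True
  then show ?thesis using a2D[OF A2 v True] by simp
next
  case False
  then have Apos: "(cmod (v n))^2 > 0" by simp
  have s: "summable (\<lambda>q. (cmod (v q))^2)" using v by (simp add: allowed_state_def sq_summable_def)
  have lim: "(\<lambda>M. p v n * (\<Sum>q<M. (cmod (v q))^2)) \<longlonglongrightarrow> p v n * sqnorm v"
    unfolding sqnorm_def by (intro tendsto_mult_left summable_LIMSEQ s)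
  show ?thesis
  proof (rule LIMSEQ_le_const2[OF lim], intro exI allI impI)
    fix M assume "M \<ge> Suc n"
    then have nM: "n < M" by simp
    have "(\<Sum>q<M. (cmod (v q))^2) = (cmod (v n))^2 + (\<Sum>q\<in>{..<M}-{n}. (cmod (v q))^2)"
      using nM by (simp add: sum.remove[of "{..<M}" n])
    then show "p v n * (\<Sum>q<M. (cmod (v q))^2) \<le> (cmod (v n))^2"
      using ub2[OF P A2 A3 v nM Apos] by simp
  qed
qed

theorem theorem3:
  fixes p :: "(nat \<Rightarrow> complex) \<Rightarrow> nat \<Rightarrow> real"
  assumes "prob_rule p" and "axiom_A2 p" and "axiom_A3 p"
  shows "\<forall>v n. allowed_state v \<longrightarrow> p v n = (cmod (v n))\<^sup>2 / sqnorm v"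
proof (intro allI impI)
  fix v n assume v: "allowed_state v"
  have S: "sqnorm v > 0" using v by (simp add: allowed_state_def)
  define q where "q = (\<lambda>k. (cmod (v k))^2 / sqnorm v)"
  have s: "summable (\<lambda>q. (cmod (v q))^2)" using v by (simp add: allowed_state_def sq_summable_def)
  have qs: "q sums 1"
  proof -
    have "(\<lambda>k. (cmod (v k))^2 / sqnorm v) sums (sqnorm v / sqnorm v)"
      unfolding sqnorm_def by (intro sums_divide summable_sums s)
    then show ?thesis using S by (simp add: q_def)
  qed
  have ps: "p v sums 1" using prob_facts(2)[OF assms(1) v] .
  have le: "p v k \<le> q k" for k
    using ub3[OF assms v, of k] S by (simp add: q_def pos_le_divide_eq)
  have "(\<lambda>k. q k - p v k) sums (1 - 1)" by (rule sums_diff[OF qs ps])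
  then have "summable (\<lambda>k. q k - p v k)" "suminf (\<lambda>k. q k - p v k) = 0"
    by (auto simp: sums_iff)
  then have "\<forall>k. q k - p v k = 0" using suminf_eq_zero_iff[of "\<lambda>k. q k - p v k"] le by simp
  then show "p v n = (cmod (v n))\<^sup>2 / sqnorm v" by (simp add: q_def)
qed

end
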